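(* For every $i\geq 0$ we have $$T_i=(-1)^i\left(\omega_D-\frac{N_{i-1}}{c_{i+1}}\right)\quad\text{and}\quad N_i=\frac{\sqrt\Delta}{c_{i+1}}-\frac{N_{i-1}}{c_{i+1}^2}.$$
   Context: $D>1$ squarefree, $K=\mathbb{Q}(\sqrt D)$, $\Delta$ its discriminant, $\alpha'$ the Galois conjugate and $N(\alpha)=\alpha\alpha'$ the norm. $\omega_D=\sqrt D$ if $D\equiv 2,3\pmod 4$ and $\omega_D=\frac{1+\sqrt D}2$ if $D\equiv1\pmod4$; $\omega_D=[u_0;u_1,u_2,\dots]$ its continued fraction. Define $p_{-1}=1$, $q_{-1}=0$, $p_0=u_0$, $q_0=1$, $p_{i+1}=u_{i+1}p_i+p_{i-1}$, $q_{i+1}=u_{i+1}q_i+q_{i-1}$ (so $p_i/q_i=[u_0;u_1,\dots,u_i]$), and $\alpha_i=p_i-q_i\omega_D'\in\mathcal{O}_K$ for $i\geq-1$. Let $N_i=|N(\alpha_i)|$ (so $N_{-1}=1$). Define $T_i$ by $\alpha_{i-1}\alpha_i'=T_i+(-1)^{i+1}\omega_D$; explicitly $T_i=p_i(p_{i-1}-q_{i-1})-q_iq_{i-1}\frac{D-1}4$ if $D\equiv1\pmod4$ and $T_i=p_ip_{i-1}-Dq_iq_{i-1}$ if $D\equiv2,3\pmod4$. Finally $c_i=[u_i;u_{i+1},u_{i+2},\dots]$ (the complete quotients). *)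

theory Defs
  imports Complex_Main "HOL-Computational_Algebra.Squarefree"
begin

text \<open>K = Q(sqrt D) embedded in the reals with sqrt D > 0; the Galois conjugate
  sends sqrt D to -sqrt D.\<close>

definition omega :: "int \<Rightarrow> real" where
  "omega D = (if D mod 4 = 1 then (1 + sqrt (real_of_int D)) / 2 else sqrt (real_of_int D))"

definition omega_conj :: "int \<Rightarrow> real" where
  "omega_conj D = (if D mod 4 = 1 then (1 - sqrt (real_of_int D)) / 2 else - sqrt (real_of_int D))"

definition disc :: "int \<Rightarrow> int" where
  "disc D = (if D mod 4 = 1 then D else 4 * D)"

primrec cq :: "int \<Rightarrow> nat \<Rightarrow> real" where
  "cq D 0 = omega D"
| "cq D (Suc n) = 1 / (cq D n - of_int \<lfloor>cq D n\<rfloor>)"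

definition u :: "int \<Rightarrow> nat \<Rightarrow> int" where
  "u D n = \<lfloor>cq D n\<rfloor>"

text \<open>Shifted convergent numerators/denominators: pp D k = p_(k-1), qq D k = q_(k-1).\<close>
fun pp :: "int \<Rightarrow> nat \<Rightarrow> int" where
  "pp D 0 = 1"
| "pp D (Suc 0) = u D 0"
| "pp D (Suc (Suc n)) = u D (Suc n) * pp D (Suc n) + pp D n"

fun qq :: "int \<Rightarrow> nat \<Rightarrow> int" where
  "qq D 0 = 0"
| "qq D (Suc 0) = 1"
| "qq D (Suc (Suc n)) = u D (Suc n) * qq D (Suc n) + qq D n"

definition cf_p :: "int \<Rightarrow> int \<Rightarrow> int" where
  "cf_p D i = pp D (nat (i + 1))"

definition cf_q :: "int \<Rightarrow> int \<Rightarrow> int" where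
  "cf_q D i = qq D (nat (i + 1))"

definition alpha :: "int \<Rightarrow> int \<Rightarrow> real" where
  "alpha D i = of_int (cf_p D i) - of_int (cf_q D i) * omega_conj D"

definition alpha_conj :: "int \<Rightarrow> int \<Rightarrow> real" where
  "alpha_conj D i = of_int (cf_p D i) - of_int (cf_q D i) * omega D"

definition Nabs :: "int \<Rightarrow> int \<Rightarrow> real" where
  "Nabs D i = \<bar>alpha D i * alpha_conj D i\<bar>"

definition T :: "int \<Rightarrow> int \<Rightarrow> int" where
  "T D i = (if D mod 4 = 1
     then cf_p D i * (cf_p D (i - 1) - cf_q D (i - 1)) - cf_q D i * cf_q D (i - 1) * ((D - 1) div 4)
     else cf_p D i * cf_p D (i - 1) - D * cf_q D i * cf_q D (i - 1))"

end

theory Submission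
  imports Defs
begin

lemma sqrt_irr:
  fixes D :: int
  assumes "D > 1" "squarefree D"
  shows "sqrt (real_of_int D) \<notin> \<rat>"
proof
  assume "sqrt (real_of_int D) \<in> \<rat>"
  then obtain a b :: int where b: "b > 0" "coprime a b" "sqrt (real_of_int D) = of_int a / of_int b"
    by (rule Rats_cases')
  have "real_of_int D = (sqrt (real_of_int D))^2" using assms(1) by simp
  then have "real_of_int D = (of_int a / of_int b)^2" using b(3) by simp
  then have "real_of_int D * (of_int b)^2 = (of_int a)^2" using b(1)
    by (simp add: field_simps power2_eq_square)
  then have eq: "D * b^2 = a^2" by (metis of_int_eq_iff of_int_mult of_int_power)
  then have "b^2 dvd a^2" by (metis dvd_triv_right)
  moreover have "coprime (b^2) (a^2)" using b(2) by (simp add: coprime_commute)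
  ultimately have "b^2 dvd 1"
    by (metis coprime_common_divisor dvd_refl)
  then have "b^2 = 1" using b(1) by simp
  then have "b = 1" using b(1) by (simp add: power2_eq_1_iff)
  then have "a^2 = D" using eq by simp
  then have "a dvd 1" using squarefreeD[OF assms(2), of a] by simp
  then have "\<bar>a\<bar> = 1" by simp
  then have "a^2 = 1" by (metis power2_abs power_one)
  then show False using \<open>a^2 = D\<close> assms(1) by simp
qed

lemma omega_irr:
  assumes "D > 1" "squarefree D"
  shows "omega D \<notin> \<rat>"
proof
  assume h: "omega D \<in> \<rat>"
  have "sqrt (real_of_int D) \<in> \<rat>"
  proof (cases "D mod 4 = 1")
    case True
    then have "sqrt (real_of_int D) = 2 * omega D - 1" by (simp add: omega_def field_simps)
    then show ?thesis using h by simp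
  next
    case False
    then show ?thesis using h by (simp add: omega_def)
  qed
  then show False using sqrt_irr assms by blast
qed

lemma cq_irr:
  assumes "D > 1" "squarefree D"
  shows "cq D n \<notin> \<rat>"
proof (induction n)
  case 0
  then show ?case using omega_irr assms by simp
next
  case (Suc n)
  show ?case
  proof
    assume "cq D (Suc n) \<in> \<rat>"
    then have "1 / (cq D n - of_int \<lfloor>cq D n\<rfloor>) \<in> \<rat>" by simp
    then have "inverse (1 / (cq D n - of_int \<lfloor>cq D n\<rfloor>)) \<in> \<rat>" by (rule Rats_inverse)
    then have "cq D n - of_int \<lfloor>cq D n\<rfloor> \<in> \<rat>" by simp
    then have "cq D n - of_int \<lfloor>cq D n\<rfloor> + of_int \<lfloor>cq D n\<rfloor> \<in> \<rat>"
      using Rats_add Rats_of_int by blast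
    then show False using Suc by simp
  qed
qed

lemma frac_pos:
  assumes "D > 1" "squarefree D"
  shows "cq D n - of_int \<lfloor>cq D n\<rfloor> > 0 \<and> cq D n - of_int \<lfloor>cq D n\<rfloor> < 1"
proof -
  have "cq D n \<noteq> of_int \<lfloor>cq D n\<rfloor>" by (metis Rats_of_int cq_irr[OF assms])
  moreover have "of_int \<lfloor>cq D n\<rfloor> \<le> cq D n" by (rule of_int_floor_le)
  moreover have "cq D n < of_int \<lfloor>cq D n\<rfloor> + 1" by (rule real_of_int_floor_add_one_gt)
  ultimately show ?thesis by linarith
qed

lemma cq_gt1:
  assumes "D > 1" "squarefree D"
  shows "cq D (Suc n) > 1"
proof -
  from frac_pos[OF assms, of n] show ?thesis by (simp add: less_divide_eq_1)
qed

lemma u_ge1: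
  assumes "D > 1" "squarefree D"
  shows "u D (Suc n) \<ge> 1"
  using cq_gt1[OF assms, of n] unfolding u_def by linarith

declare cq.simps(2)[simp del]

definition EE :: "int \<Rightarrow> nat \<Rightarrow> real" where
  "EE D n = of_int (pp D n) - of_int (qq D n) * omega D"

definition AA :: "int \<Rightarrow> nat \<Rightarrow> real" where
  "AA D n = of_int (pp D n) - of_int (qq D n) * omega_conj D"

lemma EE_rec:
  assumes "D > 1" "squarefree D"
  shows "EE D (Suc n) * cq D (Suc n) + EE D n = 0"
proof (induction n)
  case 0
  have "omega D - of_int \<lfloor>omega D\<rfloor> > 0" using frac_pos[OF assms, of 0] by simp
  then show ?case by (simp add: EE_def u_def field_simps cq.simps)
next
  case (Suc n)
  define x where "x = cq D (Suc n) - of_int (u D (Suc n))"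
  have x: "x > 0" using frac_pos[OF assms, of "Suc n"] by (simp add: x_def u_def)
  have c2: "cq D (Suc (Suc n)) = 1 / x" by (simp add: x_def u_def cq.simps)
  have "EE D (Suc (Suc n)) = of_int (u D (Suc n)) * EE D (Suc n) + EE D n"
    by (simp add: EE_def algebra_simps)
  also have "\<dots> = - EE D (Suc n) * x"
  proof -
    have "EE D n = - EE D (Suc n) * cq D (Suc n)" using Suc.IH by linarith
    then show ?thesis by (simp add: x_def algebra_simps del: cq.simps)
  qed
  finally show ?case using c2 x by simp
qed

lemma EE_sign:
  assumes "D > 1" "squarefree D"
  shows "(-1)^n * EE D n > 0 \<and> \<bar>EE D n\<bar> \<le> 1"
proof (induction n)
  case 0
  then show ?case by (simp add: EE_def)
next
  case (Suc n)
  have c: "cq D (Suc n) > 1" by (rule cq_gt1[OF assms])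
  have e: "EE D (Suc n) = - EE D n / cq D (Suc n)" using EE_rec[OF assms, of n] c
    by (simp add: field_simps)
  have "(-1)^Suc n * EE D (Suc n) = ((-1)^n * EE D n) / cq D (Suc n)" unfolding e by simp
  moreover have "\<bar>EE D (Suc n)\<bar> = \<bar>EE D n\<bar> / cq D (Suc n)" unfolding e using c by simp
  moreover have "\<bar>EE D n\<bar> / cq D (Suc n) \<le> 1" using Suc c by (simp add: divide_le_eq)
  ultimately show ?case using Suc c by simp
qed

lemma qq_pos:
  assumes "D > 1" "squarefree D"
  shows "qq D n \<ge> 0 \<and> qq D (Suc n) \<ge> 1"
proof (induction n)
  case 0
  then show ?case by simp
next
  case (Suc n)
  have "u D (Suc n) \<ge> 1" by (rule u_ge1[OF assms])
  then have "1 * 1 \<le> u D (Suc n) * qq D (Suc n)" using Suc by (intro mult_mono) auto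
  then show ?case using Suc by simp
qed

lemma det:
  "of_int (pp D (Suc n)) * of_int (qq D n) - of_int (pp D n) * of_int (qq D (Suc n)) = - ((-1::real)^n)"
proof (induction n)
  case 0
  then show ?case by simp
next
  case (Suc n)
  then show ?case by (simp add: algebra_simps)
qed

lemma sqrt_disc:
  assumes "D > 1"
  shows "omega D - omega_conj D = sqrt (real_of_int (disc D)) \<and> sqrt (real_of_int (disc D)) > 1"
proof -
  have s1: "sqrt (real_of_int D) > 1" using assms by simp
  show ?thesis
  proof (cases "D mod 4 = 1")
    case True
    then show ?thesis using s1 by (simp add: omega_def omega_conj_def disc_def field_simps)
  next
    case False
    have "sqrt (real_of_int (4*D)) = 2 * sqrt (real_of_int D)" by (simp add: real_sqrt_mult)
    moreover have "1 < 2 * sqrt (real_of_int D)" using s1 by linarith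
    ultimately show ?thesis using False by (simp add: omega_def omega_conj_def disc_def)
  qed
qed

lemma AA_pos:
  assumes "D > 1" "squarefree D"
  shows "AA D n > 0"
proof (cases n)
  case 0
  then show ?thesis by (simp add: AA_def)
next
  case (Suc m)
  have "AA D n = EE D n + of_int (qq D n) * (omega D - omega_conj D)"
    by (simp add: AA_def EE_def algebra_simps)
  moreover have "of_int (qq D n) \<ge> (1::real)" using qq_pos[OF assms, of m] Suc by simp
  moreover have "\<bar>EE D n\<bar> \<le> 1" using EE_sign[OF assms] by blast
  moreover have "sqrt (real_of_int (disc D)) > 1" using sqrt_disc assms by blast
  ultimately show ?thesis
  proof -
    assume a1: "AA D n = EE D n + of_int (qq D n) * (omega D - omega_conj D)"
      and a2: "of_int (qq D n) \<ge> (1::real)" and a3: "\<bar>EE D n\<bar> \<le> 1"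
      and a4: "sqrt (real_of_int (disc D)) > 1"
    have h: "omega D - omega_conj D = sqrt (real_of_int (disc D))" using sqrt_disc[OF assms(1)] by blast
    have "of_int (qq D n) * sqrt (real_of_int (disc D)) \<ge> 1 * sqrt (real_of_int (disc D))"
      using a2 a4 by (intro mult_right_mono) auto
    moreover have "AA D n = EE D n + of_int (qq D n) * sqrt (real_of_int (disc D))" using a1 h by simp
    ultimately show ?thesis using a3 a4 by linarith
  qed
qed

lemma abs_sign: "0 < (-1::real)^n * x \<Longrightarrow> \<bar>x\<bar> = (-1)^n * x"
  by (cases "even n") auto

lemma alg_core:
  fixes w w' t n0 s \<sigma> P0 P1 Q0 Q1 c Tr Nm N :: real
  assumes h1: "w + w' = t" and h2: "w*w' = n0" and h3: "w - w' = s" and h4: "\<sigma>*\<sigma> = 1"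
    and h5: "P1*Q0 - P0*Q1 = -\<sigma>" and h6: "(P1 - Q1*w)*c + (P0 - Q0*w) = 0" and h7: "c \<noteq> 0"
    and h8: "Tr = P1*P0 - P1*Q0*t + Q1*Q0*n0"
    and h9: "Nm = \<sigma>*(P0 - Q0*w')*(P0 - Q0*w)"
    and h10: "N = -\<sigma>*(P1 - Q1*w')*(P1 - Q1*w)"
  shows "Tr = \<sigma>*(w - Nm/c) \<and> N = s/c - Nm/c^2"
proof -
  have E0: "P0 - Q0*w = -c*(P1 - Q1*w)" using h6 by (simp add: algebra_simps)
  have w': "w' = t - w" using h1 by simp
  have n0: "n0 = w*(t-w)" using h2 w' by simp
  have Nmc: "Nm/c = -\<sigma>*(P0 - Q0*w')*(P1 - Q1*w)" using h9 E0 h7 by (simp add: field_simps)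
  have A: "(P0 - Q0*w')*(P1 - Q1*w) = Tr - \<sigma>*w"
  proof -
    have "(P0 - Q0*w')*(P1 - Q1*w) = P1*P0 - P1*Q0*t + Q1*Q0*n0 + w*(P1*Q0 - P0*Q1)"
      unfolding w' n0 by (simp add: algebra_simps)
    then show ?thesis using h5 h8 by (simp add: algebra_simps)
  qed
  have Nmc2: "Nm/c = -\<sigma>*(Tr - \<sigma>*w)" using Nmc A by (simp add: mult.assoc)
  have "\<sigma>*(w - Nm/c) = \<sigma>*w + (\<sigma>*\<sigma>)*(Tr - \<sigma>*w)" unfolding Nmc2 by (simp add: algebra_simps)
  then have T1: "Tr = \<sigma>*(w - Nm/c)" using h4 by simp
  have B: "(P0 - Q0*w)*(P1 - Q1*w') = Tr - \<sigma>*w'"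
  proof -
    have "(P0 - Q0*w)*(P1 - Q1*w') = P1*P0 - P1*Q0*t + Q1*Q0*n0 + w'*(P1*Q0 - P0*Q1)"
      using h1 h2 by (simp add: h1[symmetric] h2[symmetric] algebra_simps)
    then show ?thesis using h5 h8 by (simp add: algebra_simps)
  qed
  have C: "(P1 - Q1*w')*(P1 - Q1*w) = -(Tr - \<sigma>*w')/c"
    using B E0 h7 by (simp add: field_simps)
  have "N = -\<sigma>*((P1 - Q1*w')*(P1 - Q1*w))" using h10 by (simp add: mult.assoc)
  also have "\<dots> = (\<sigma>*Tr - \<sigma>*\<sigma>*w')/c" unfolding C by (simp add: field_simps)
  finally have "N = (\<sigma>*Tr - \<sigma>*\<sigma>*w')/c" .
  also have "\<dots> = (w - Nm/c - w')/c"
  proof -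
    have "\<sigma>*Tr = (\<sigma>*\<sigma>)*(w - Nm/c)" by (subst T1) (simp add: mult.assoc)
    then show ?thesis using h4 by simp
  qed
  also have "\<dots> = s/c - Nm/c^2" using h3 h7 by (simp add: field_simps power2_eq_square)
  finally show ?thesis using T1 by simp
qed


theorem lemma4:
  fixes D :: int and i :: nat
  assumes "D > 1" and "squarefree D"
  shows "real_of_int (T D (int i)) = (-1) ^ i * (omega D - Nabs D (int i - 1) / cq D (i + 1))
    \<and> Nabs D (int i) = sqrt (real_of_int (disc D)) / cq D (i + 1) - Nabs D (int i - 1) / (cq D (i + 1))^2"
proof -
  define t :: real where "t = (if D mod 4 = 1 then 1 else 0)"
  define n0 :: real where "n0 = (if D mod 4 = 1 then (1 - real_of_int D)/4 else - real_of_int D)"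
  define \<sigma> :: real where "\<sigma> = (-1)^i"
  have h1: "omega D + omega_conj D = t"
    by (cases "D mod 4 = 1") (simp_all add: t_def omega_def omega_conj_def field_simps)
  have h2: "omega D * omega_conj D = n0"
  proof (cases "D mod 4 = 1")
    case True
    have "(1 + sqrt (real_of_int D)) / 2 * ((1 - sqrt (real_of_int D)) / 2)
       = (1 - (sqrt (real_of_int D))^2)/4" by (simp add: field_simps power2_eq_square)
    then show ?thesis using True assms(1) by (simp add: n0_def omega_def omega_conj_def)
  next
    case False
    then show ?thesis using assms(1) by (simp add: n0_def omega_def omega_conj_def)
  qed
  have h3: "omega D - omega_conj D = sqrt (real_of_int (disc D))" using sqrt_disc assms by blast
  have h4: "\<sigma> * \<sigma> = 1" by (simp add: \<sigma>_def flip: power_add mult_2)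
  have h5: "of_int (pp D (Suc i)) * of_int (qq D i) - of_int (pp D i) * of_int (qq D (Suc i)) = -\<sigma>"
    using det \<sigma>_def by simp
  have h6: "EE D (Suc i) * cq D (Suc i) + EE D i = 0" by (rule EE_rec[OF assms])
  have h7: "cq D (Suc i) \<noteq> 0" using cq_gt1[OF assms, of i] by simp
  have idx1: "nat (int i - 1 + 1) = i" "nat (int i + 1) = Suc i" by auto
  have Tr: "real_of_int (T D (int i)) = of_int (pp D (Suc i)) * of_int (pp D i)
     - of_int (pp D (Suc i)) * of_int (qq D i) * t + of_int (qq D (Suc i)) * of_int (qq D i) * n0"
  proof (cases "D mod 4 = 1")
    case True
    have "4 dvd (D - 1)" using True by presburger
    then have "real_of_int ((D - 1) div 4) = (real_of_int D - 1)/4"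
      by (simp add: real_of_int_div)
    have "T D (int i) = pp D (Suc i) * (pp D i - qq D i) - qq D (Suc i) * qq D i * ((D - 1) div 4)"
      using True by (simp add: T_def cf_p_def cf_q_def idx1)
    then have "real_of_int (T D (int i)) = of_int (pp D (Suc i)) * (of_int (pp D i) - of_int (qq D i))
       - of_int (qq D (Suc i)) * of_int (qq D i) * ((real_of_int D - 1)/4)"
      using \<open>real_of_int ((D - 1) div 4) = (real_of_int D - 1)/4\<close> by simp
    moreover have "n0 = - ((real_of_int D - 1)/4)" "t = 1" using True by (simp_all add: n0_def t_def field_simps)
    ultimately show ?thesis by (simp add: right_diff_distrib)
  next
    case False
    have "T D (int i) = pp D (Suc i) * pp D i - D * qq D (Suc i) * qq D i"
      using False by (simp add: T_def cf_p_def cf_q_def idx1)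
    then show ?thesis using False by (simp add: t_def n0_def)
  qed
  have Nm: "Nabs D (int i - 1) = \<sigma> * AA D i * EE D i"
  proof -
    have "Nabs D (int i - 1) = \<bar>AA D i * EE D i\<bar>"
      by (simp add: Nabs_def alpha_def alpha_conj_def AA_def EE_def cf_p_def cf_q_def idx1)
    also have "\<dots> = AA D i * (\<sigma> * EE D i)"
      using AA_pos[OF assms, of i] EE_sign[OF assms, of i] \<sigma>_def
      by (simp add: abs_mult abs_sign)
    finally show ?thesis by simp
  qed
  have N: "Nabs D (int i) = - \<sigma> * AA D (Suc i) * EE D (Suc i)"
  proof -
    have "Nabs D (int i) = \<bar>AA D (Suc i) * EE D (Suc i)\<bar>"
      by (simp add: Nabs_def alpha_def alpha_conj_def AA_def EE_def cf_p_def cf_q_def idx1)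
    also have "\<dots> = AA D (Suc i) * ((-1)^Suc i * EE D (Suc i))"
      using AA_pos[OF assms, of "Suc i"] EE_sign[OF assms, of "Suc i"]
      by (simp add: abs_mult abs_sign del: power_Suc)
    finally show ?thesis by (simp add: \<sigma>_def)
  qed
  have "real_of_int (T D (int i)) = \<sigma> * (omega D - Nabs D (int i - 1) / cq D (Suc i))
     \<and> Nabs D (int i) = sqrt (real_of_int (disc D)) / cq D (Suc i) - Nabs D (int i - 1) / (cq D (Suc i))^2"
    apply (rule alg_core[OF h1 h2 h3 h4 h5 _ h7 Tr])
    using h6 Nm N by (simp_all add: EE_def AA_def mult.assoc)
  then show ?thesis by (simp add: \<sigma>_def)
qed

end
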